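(* Let $p$ be a prime and $n\ge 2$ an integer with base-$p$ expansion $n=n_0+n_1p+\cdots+n_kp^k$, where $n_0,\ldots,n_k\in\{0,1,\ldots,p-1\}$ and $n_k>0$. Define \[ P := \{ b_0+b_1p+\cdots+b_kp^k : 0\le b_j\le n_j,\ j=0,1,\ldots,k\}\setminus\{0,n\}, \] which is a subset of $[n-1]$ with $|P|=\prod_{j=0}^k(n_j+1)-2$. For each composition $\beta=(\beta_1,\ldots,\beta_\ell)$ of $n$ write the base-$p$ digits of each part as $\beta_i=\sum_{j=0}^k\beta_{ij}p^j$ with $\beta_{ij}\in\{0,\ldots,p-1\}$ (padding with zeros). For each $T\subseteq P$ define \[ r(T) := \sum_{\substack{\beta\models n,\ D(\beta)\subseteq T\\ \beta_{1j}+\cdots+\beta_{\ell j}=n_j\ \forall j}} (-1)^{|T|-|D(\beta)|}\prod_{j=0}^k\binom{n_j}{\beta_{1j},\ldots,\beta_{\ell j}}. \] Then for every $i\in\mathbb{Z}_p$, \[ c_{p,i}(n)=\begin{cases} 2^{\,n+1-\prod_{j=0}^k(n_j+1)}\,\bigl|\{T\subseteq P: r(T)\equiv i \pmod p\}\bigr| & \text{if } p=2 \text{ or } i=0 \text{ or } n_0=\cdots=n_{k-1}=p-1,\\ 2^{\,n-\prod_{j=0}^k(n_j+1)}\,\bigl|\{T\subseteq P: r(T)\equiv i \text{ or } r(T)\equiv -i \pmod p\}\bigr| & \text{otherwise.}\end{cases} \]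
   Context: For a permutation $w$ of $[n]=\{1,\ldots,n\}$, its descent set is $D(w)=\{i\in[n-1]: w(i)>w(i+1)\}$. A composition of $n$ (written $\alpha\models n$) is a sequence $\alpha=(\alpha_1,\ldots,\alpha_\ell)$ of positive integers with sum $n$; its length is $\ell(\alpha)=\ell$ and its descent set is $D(\alpha)=\{\alpha_1,\alpha_1+\alpha_2,\ldots,\alpha_1+\cdots+\alpha_{\ell-1}\}\subseteq[n-1]$. The ribbon number of $\alpha$ is $r_\alpha=|\{w\in\mathfrak{S}_n: D(w)=D(\alpha)\}|$. For a prime $p$ and $i\in\mathbb{Z}_p$, $c_{p,i}(n)$ is the number of compositions $\alpha\models n$ with $r_\alpha\equiv i\pmod p$. Multinomial coefficients $\binom{m}{m_1,\ldots,m_k}$ (nonnegative entries) equal $m!/(m_1!\cdots m_k!)$ if $m_1+\cdots+m_k=m$ and $0$ otherwise. *)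

theory Defs
  imports "HOL-Combinatorics.Combinatorics" "HOL-Number_Theory.Number_Theory"
begin

definition perm_descents :: "nat \<Rightarrow> (nat \<Rightarrow> nat) \<Rightarrow> nat set" where
  "perm_descents n w = {i \<in> {1..n-1}. w i > w (Suc i)}"

definition is_composition :: "nat \<Rightarrow> nat list \<Rightarrow> bool" where
  "is_composition n \<alpha> \<longleftrightarrow> (\<forall>a\<in>set \<alpha>. 0 < a) \<and> sum_list \<alpha> = n"

definition compositions :: "nat \<Rightarrow> nat list set" where
  "compositions n = {\<alpha>. is_composition n \<alpha>}"

definition comp_descents :: "nat list \<Rightarrow> nat set" where
  "comp_descents \<alpha> = {sum_list (take j \<alpha>) | j. 1 \<le> j \<and> j < length \<alpha>}"

definition ribbon :: "nat \<Rightarrow> nat list \<Rightarrow> nat" where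
  "ribbon n \<alpha> = card {w. w permutes {1..n} \<and> perm_descents n w = comp_descents \<alpha>}"

definition c_count :: "nat \<Rightarrow> int \<Rightarrow> nat \<Rightarrow> nat" where
  "c_count p i n = card {\<alpha> \<in> compositions n. [int (ribbon n \<alpha>) = i] (mod int p)}"

definition digit :: "nat \<Rightarrow> nat \<Rightarrow> nat \<Rightarrow> nat" where
  "digit p m j = (m div p ^ j) mod p"

definition multinom :: "nat \<Rightarrow> nat list \<Rightarrow> nat" where
  "multinom m ms = (if sum_list ms = m then fact m div prod_list (map fact ms) else 0)"

text \<open>The set P (k is the index of the top base-p digit of n).\<close>
definition Pset :: "nat \<Rightarrow> nat \<Rightarrow> nat \<Rightarrow> nat set" where
  "Pset p k n = {(\<Sum>j\<le>k. b j * p ^ j) | b. \<forall>j\<le>k. b j \<le> digit p n j} - {0, n}"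

definition rT :: "nat \<Rightarrow> nat \<Rightarrow> nat \<Rightarrow> nat set \<Rightarrow> int" where
  "rT p k n T = (\<Sum>\<beta> \<in> {\<beta> \<in> compositions n. comp_descents \<beta> \<subseteq> T \<and>
                    (\<forall>j\<le>k. (\<Sum>b\<leftarrow>\<beta>. digit p b j) = digit p n j)}.
      (-1) ^ (card T - card (comp_descents \<beta>)) *
      (\<Prod>j\<le>k. int (multinom (digit p n j) (map (\<lambda>b. digit p b j) \<beta>))))"

end

theory Submission
  imports Defs
begin


lemma lucas_step:
  fixes p :: nat
  assumes p: "prime p"
  shows "s < p \<Longrightarrow> v < p \<Longrightarrow>
    [(q*p+s) choose (u*p+v) = (q choose u)*(s choose v)] (mod p)"
proof (induction "q*p+s" arbitrary: q s u v rule: less_induct)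
  case (less q s u v)
  have p1: "p > 1" using p prime_gt_1_nat by blast
  have pl: "p - 1 < p" using p1 by simp
  have vl: "v - 1 < p" using less.prems by simp
  show ?case
  proof (cases "u*p+v = 0")
    case True
    then show ?thesis using p1 by auto
  next
    case r0: False
    show ?thesis
    proof (cases "q*p+s = 0")
      case True
      then have "q = 0" "s = 0" using p1 by auto
      have z1: "(0::nat) choose (u*p+v) = 0" using r0 by simp
      have z2: "((0::nat) choose u) * (0 choose v) = 0" using r0 by (cases "u = 0") auto
      show ?thesis unfolding \<open>q = 0\<close> \<open>s = 0\<close> mult_zero_left add_0 z1 z2 by (rule cong_refl)
    next
      case N0: False
      define m where "m = q*p+s - 1"
      define t where "t = u*p+v - 1"
      have Nm: "q*p+s = Suc m" and rt: "u*p+v = Suc t" using N0 r0 m_def t_def by auto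
      have pascal: "(q*p+s) choose (u*p+v) = (m choose t) + (m choose (u*p+v))"
        using Nm rt by simp
      show ?thesis
      proof (cases "s > 0")
        case s0: True
        have m_eq: "m = q*p + (s-1)" using m_def s0 by simp
        have sl: "s - 1 < p" using less.prems by simp
        have lt1: "q*p+(s-1) < q*p+s" using s0 by simp
        have IH2: "[m choose (u*p+v) = (q choose u)*((s-1) choose v)] (mod p)"
          unfolding m_eq by (rule less.hyps[OF lt1 sl less.prems(2)])
        show ?thesis
        proof (cases "v > 0")
          case v0: True
          have t_eq: "t = u*p+(v-1)" using t_def v0 by simp
          have IH1: "[m choose t = (q choose u)*((s-1) choose (v-1))] (mod p)"
            unfolding m_eq t_eq by (rule less.hyps[OF lt1 sl vl])
          have "(q choose u)*((s-1) choose (v-1)) + (q choose u)*((s-1) choose v)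
                = (q choose u)*(s choose v)"
            using s0 v0 by (cases s; cases v) (auto simp: algebra_simps)
          then show ?thesis using pascal cong_add[OF IH1 IH2] by simp
        next
          case v0: False
          then have v: "v = 0" by simp
          then have u0: "u > 0" using r0 by simp
          have t_eq: "t = (u-1)*p+(p-1)" using t_def v u0 p1
            by (cases u) (auto simp: algebra_simps)
          have IH1: "[m choose t = ((q choose (u-1)))*((s-1) choose (p-1))] (mod p)"
            unfolding m_eq t_eq by (rule less.hyps[OF lt1 sl pl])
          have z: "(s-1) choose (p-1) = 0" using less.prems(1) s0 by (intro binomial_eq_0) linarith
          have e: "(q choose u) * (s choose v) = (q choose u)*((s-1) choose v)" unfolding v binomial_n_0 by (rule refl)
          have c: "[(m choose t) + (m choose (u*p+v)) = (q choose (u-1)) * 0 + (q choose u)*((s-1) choose v)] (mod p)"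
            using cong_add[OF IH1 IH2] unfolding z .
          show ?thesis unfolding pascal e using c by simp
        qed
      next
        case s0: False
        then have s: "s = 0" by simp
        then have q0: "q > 0" using N0 by simp
        have m_eq: "m = (q-1)*p + (p-1)" using m_def s q0 p1
          by (cases q) (auto simp: algebra_simps)
        have lt: "(q-1)*p + (p-1) < q*p+s" using q0 p1 s
          by (cases q) (auto simp: algebra_simps)
        have IH2: "[m choose (u*p+v) = ((q-1) choose u)*((p-1) choose v)] (mod p)"
          unfolding m_eq by (rule less.hyps[OF lt pl less.prems(2)])
        show ?thesis
        proof (cases "v > 0")
          case v0: True
          have t_eq: "t = u*p+(v-1)" using t_def v0 by simp
          have IH1: "[m choose t = ((q-1) choose u)*((p-1) choose (v-1))] (mod p)"
            unfolding m_eq t_eq by (rule less.hyps[OF lt pl vl])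
          have "((q-1) choose u)*((p-1) choose (v-1)) + ((q-1) choose u)*((p-1) choose v)
                = ((q-1) choose u)*(p choose v)"
            using p1 v0 by (cases p; cases v) (auto simp: algebra_simps)
          moreover have "p dvd (p choose v)"
            using dvd_choose_prime[of v p] v0 less.prems p by simp
          ultimately have "[(m choose t) + (m choose (u*p+v)) = 0] (mod p)"
            using cong_add[OF IH1 IH2] by (simp add: cong_0_iff cong_def)
          moreover have "(q choose u) * (s choose v) = 0" using s v0 by simp
          ultimately show ?thesis unfolding pascal by metis
        next
          case v0: False
          then have v: "v = 0" by simp
          then have u0: "u > 0" using r0 by simp
          have t_eq: "t = (u-1)*p+(p-1)" using t_def v u0 p1
            by (cases u) (auto simp: algebra_simps)
          have IH1: "[m choose t = ((q-1) choose (u-1))*((p-1) choose (p-1))] (mod p)"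
            unfolding m_eq t_eq by (rule less.hyps[OF lt pl pl])
          have "((q-1) choose (u-1)) + ((q-1) choose u) = q choose u"
            using q0 u0 by (cases q; cases u) auto
          then show ?thesis using pascal cong_add[OF IH1 IH2] v s by simp
        qed
      qed
    qed
  qed
qed

lemma lucas1:
  fixes p :: nat
  assumes "prime p"
  shows "[n choose r = ((n div p) choose (r div p)) * ((n mod p) choose (r mod p))] (mod p)"
proof -
  have p0: "p > 0" using assms prime_gt_0_nat by blast
  show ?thesis
    using lucas_step[OF assms, of "n mod p" "r mod p" "n div p" "r div p"] p0
    by (simp add: mult.commute)
qed



lemma prod_fact_dvd: "prod_list (map fact ms) dvd (fact (sum_list ms) :: nat)"
proof (induction ms)
  case Nil then show ?case by simp
next
  case (Cons a as)
  define s where "s = sum_list as"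
  have "fact a * fact (a + s - a) * ((a + s) choose a) = (fact (a + s) :: nat)"
    by (rule binomial_fact_lemma) simp
  then have e: "fact (a + s) = ((a + s) choose a) * (fact a * (fact s :: nat))"
    by (simp add: ac_simps)
  have "fact a * prod_list (map fact as) dvd fact a * (fact s :: nat)"
    using Cons.IH unfolding s_def by (rule mult_dvd_mono[OF dvd_refl])
  then have "fact a * prod_list (map fact as) dvd (fact (a + s) :: nat)"
    using e by (metis dvd_mult)
  then show ?case unfolding s_def by simp
qed

lemma multinom_Nil: "multinom m [] = (if m = 0 then 1 else 0)"
  by (simp add: multinom_def)

lemma multinom_Cons: "multinom m (a # as) = (m choose a) * multinom (m - a) as"
proof (cases "a \<le> m")
  case False
  then show ?thesis by (simp add: multinom_def)
next
  case am: True
  show ?thesis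
  proof (cases "sum_list as = m - a")
    case False
    then have "sum_list (a#as) \<noteq> m" using am by simp
    then show ?thesis using False by (simp add: multinom_def)
  next
    case True
    obtain K :: nat where K: "fact (sum_list as) = prod_list (map fact as) * K"
      using prod_fact_dvd[of as] by (metis dvdE)
    have P0: "prod_list (map fact as) > (0::nat)"
      by (induction as) auto
    have fm: "fact m = (m choose a) * fact a * (fact (m - a) :: nat)"
      using binomial_fact_lemma[OF am] by (simp add: algebra_simps)
    have "multinom m (a#as) = fact m div (fact a * prod_list (map fact as))"
      using True am by (simp add: multinom_def)
    also have "\<dots> = ((m choose a) * K * (fact a * prod_list (map fact as))) div (fact a * prod_list (map fact as))"
      using fm K True by (simp add: algebra_simps)
    also have "\<dots> = (m choose a) * K" using P0 by simp
    also have "K = multinom (m - a) as" using K True P0 by (simp add: multinom_def)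
    finally show ?thesis by simp
  qed
qed

lemma divmod_sub:
  fixes p :: nat
  assumes "p > 0" "a \<le> n" "a mod p \<le> n mod p"
  shows "(n - a) mod p = n mod p - a mod p" "(n - a) div p = n div p - a div p"
proof -
  have le: "a div p \<le> n div p" using assms(2) by (simp add: div_le_mono)
  have n: "n = n div p * p + n mod p" by simp
  have a: "a = a div p * p + a mod p" by simp
  have le2: "a div p * p \<le> n div p * p" using le by simp
  have "(n div p - a div p) * p = n div p * p - a div p * p" by (simp add: diff_mult_distrib)
  then have e: "n - a = (n div p - a div p) * p + (n mod p - a mod p)"
    using le2 assms(3) n a by linarith
  have lt: "n mod p - a mod p < p" using assms(1) by (meson le_less_trans diff_le_self mod_less_divisor)
  show "(n - a) mod p = n mod p - a mod p" unfolding e using lt by simp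
  show "(n - a) div p = n div p - a div p" unfolding e using lt assms(1) by simp
qed

lemma lucas_multinom1:
  fixes p :: nat
  assumes p: "prime p"
  shows "[multinom n bs = multinom (n div p) (map (\<lambda>b. b div p) bs) *
            multinom (n mod p) (map (\<lambda>b. b mod p) bs)] (mod p)"
proof (induction bs arbitrary: n)
  case Nil
  have p0: "p > 0" using p prime_gt_0_nat by blast
  have "(n = 0) = (n div p = 0 \<and> n mod p = 0)" using p0
    by (metis div_mult_mod_eq mult_0_right add_0 div_0 mod_0)
  then show ?case by (simp add: multinom_Nil)
next
  case (Cons a as)
  have p0: "p > 0" using p prime_gt_0_nat by blast
  have L: "[multinom n (a#as) = ((n div p) choose (a div p)) * ((n mod p) choose (a mod p)) *
      (multinom ((n - a) div p) (map (\<lambda>b. b div p) as) * multinom ((n - a) mod p) (map (\<lambda>b. b mod p) as))] (mod p)"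
    unfolding multinom_Cons by (rule cong_mult[OF lucas1[OF p] Cons.IH])
  show ?case
  proof (cases "a mod p \<le> n mod p")
    case False
    then have z: "(n mod p) choose (a mod p) = 0" by simp
    show ?thesis using L by (simp add: z multinom_Cons)
  next
    case amod: True
    show ?thesis
    proof (cases "a \<le> n")
      case False
      then have "a div p > n div p"
        using amod by (metis div_mult_mod_eq add_le_mono mult_le_mono1 not_le)
      then have z: "(n div p) choose (a div p) = 0" by simp
      show ?thesis using L by (simp add: z multinom_Cons)
    next
      case True
      note d = divmod_sub[OF p0 True amod]
      show ?thesis using L unfolding d by (simp add: multinom_Cons algebra_simps)
    qed
  qed
qed

lemma digit_Suc: "digit p m (Suc j) = digit p (m div p) j"
  by (simp add: digit_def div_mult2_eq)

lemma lucas_multinom_iter: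
  fixes p :: nat
  assumes p: "prime p"
  shows "[multinom n bs = multinom (n div p^K) (map (\<lambda>b. b div p^K) bs) *
            (\<Prod>j<K. multinom (digit p n j) (map (\<lambda>b. digit p b j) bs))] (mod p)"
proof (induction K)
  case 0
  then show ?case by simp
next
  case (Suc K)
  have st: "[multinom (n div p^K) (map (\<lambda>b. b div p^K) bs) =
      multinom (n div p^K div p) (map (\<lambda>b. b div p) (map (\<lambda>b. b div p^K) bs)) *
      multinom (n div p^K mod p) (map (\<lambda>b. b mod p) (map (\<lambda>b. b div p^K) bs))] (mod p)"
    by (rule lucas_multinom1[OF p])
  have dd: "\<And>x. x div p^K div p = x div p^Suc K" by (metis div_mult2_eq power_Suc2)
  have e1: "map (\<lambda>b. b div p) (map (\<lambda>b. b div p^K) bs) = map (\<lambda>b. b div p^Suc K) bs"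
    by (simp add: dd)
  have e2: "map (\<lambda>b. b mod p) (map (\<lambda>b. b div p^K) bs) = map (\<lambda>b. digit p b K) bs"
    by (simp add: digit_def)
  have e3: "n div p^K div p = n div p^Suc K" by (rule dd)
  have e4: "n div p^K mod p = digit p n K" by (simp add: digit_def)
  have "[multinom n bs = (multinom (n div p^Suc K) (map (\<lambda>b. b div p^Suc K) bs) *
      multinom (digit p n K) (map (\<lambda>b. digit p b K) bs)) *
            (\<Prod>j<K. multinom (digit p n j) (map (\<lambda>b. digit p b j) bs))] (mod p)"
    using cong_trans[OF Suc.IH cong_mult[OF st cong_refl]] unfolding e1 e2 e3 e4 .
  then show ?case by (simp add: algebra_simps)
qed

lemma multinom_zeros: "multinom 0 (map (\<lambda>b. 0) bs) = 1"
  by (induction bs) (auto simp: multinom_Nil multinom_Cons)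

lemma lucas_multinom:
  fixes p :: nat
  assumes p: "prime p" and n: "n < p ^ Suc k" and s: "sum_list bs = n"
  shows "[int (multinom n bs) = (\<Prod>j\<le>k. int (multinom (digit p n j) (map (\<lambda>b. digit p b j) bs)))] (mod int p)"
proof -
  have le: "\<forall>b\<in>set bs. b \<le> n" using s by (auto simp: member_le_sum_list)
  have z: "map (\<lambda>b. b div p^Suc k) bs = map (\<lambda>b. 0) bs"
    using le n by (auto intro!: map_cong)
  have "[multinom n bs = (\<Prod>j<Suc k. multinom (digit p n j) (map (\<lambda>b. digit p b j) bs))] (mod p)"
    using lucas_multinom_iter[OF p, of n bs "Suc k"] n unfolding z by (simp add: multinom_zeros)
  then show ?thesis
    by (simp add: lessThan_Suc_atMost cong_int_iff flip: of_nat_prod)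
qed



lemma digit_expand: "(\<Sum>j<K. digit p m j * p ^ j) = m mod p ^ K"
proof (induction K arbitrary: m)
  case 0 then show ?case by simp
next
  case (Suc K)
  have "(\<Sum>j<Suc K. digit p m j * p ^ j) = digit p m 0 + (\<Sum>j<K. digit p m (Suc j) * p ^ Suc j)"
    unfolding sum.lessThan_Suc_shift by simp
  also have "(\<Sum>j<K. digit p m (Suc j) * p ^ Suc j) = p * (\<Sum>j<K. digit p (m div p) j * p ^ j)"
    by (simp add: digit_Suc sum_distrib_left ac_simps)
  also have "\<dots> = p * (m div p mod p ^ K)" using Suc.IH by simp
  also have "digit p m 0 + p * (m div p mod p ^ K) = m mod (p * p ^ K)"
    by (simp add: digit_def mod_mult2_eq)
  finally show ?case by simp
qed

lemma digit_expand_le: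
  assumes "m < p ^ Suc k"
  shows "(\<Sum>j\<le>k. digit p m j * p ^ j) = m"
  using digit_expand[of p m "Suc k"] assms by (simp add: lessThan_Suc_atMost)

lemma digit_val:
  assumes "\<forall>j<K. b j < p" "i < K"
  shows "digit p (\<Sum>j<K. b j * p ^ j) i = b i"
  using assms
proof (induction i arbitrary: K b)
  case 0
  then obtain K' where K: "K = Suc K'" by (cases K) auto
  have "(\<Sum>j<K. b j * p ^ j) = b 0 + p * (\<Sum>j<K'. b (Suc j) * p ^ j)"
    unfolding K sum.lessThan_Suc_shift by (simp add: sum_distrib_left ac_simps)
  then show ?case using 0 by (simp add: digit_def)
next
  case (Suc i)
  then obtain K' where K: "K = Suc K'" by (cases K) auto
  have p0: "p > 0" using Suc.prems by auto
  have "(\<Sum>j<K. b j * p ^ j) = b 0 + p * (\<Sum>j<K'. b (Suc j) * p ^ j)"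
    unfolding K sum.lessThan_Suc_shift by (simp add: sum_distrib_left ac_simps)
  then have "(\<Sum>j<K. b j * p ^ j) div p = (\<Sum>j<K'. b (Suc j) * p ^ j)"
    using Suc.prems p0 by simp
  then have "digit p (\<Sum>j<K. b j * p ^ j) (Suc i) = digit p (\<Sum>j<K'. b (Suc j) * p ^ j) i"
    by (simp add: digit_Suc)
  also have "\<dots> = b (Suc i)"
    using Suc.IH[of K' "\<lambda>j. b (Suc j)"] Suc.prems K by simp
  finally show ?case .
qed

lemma digit_lt: "p > 0 \<Longrightarrow> digit p m j < p"
  by (simp add: digit_def)

lemma sum_list_map_sum:
  "sum_list (map (\<lambda>x. sum (f x) A) xs) = sum (\<lambda>j. sum_list (map (\<lambda>x. f x j) xs)) A"
  by (induction xs) (simp_all add: sum.distrib)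

lemma sum_list_take_le: "sum_list (take t (xs :: nat list)) \<le> sum_list xs"
proof -
  have "sum_list xs = sum_list (take t xs) + sum_list (drop t xs)"
    by (metis append_take_drop_id sum_list_append)
  then show ?thesis by simp
qed

definition Gset :: "nat \<Rightarrow> nat \<Rightarrow> nat \<Rightarrow> nat set" where
  "Gset p k n = {(\<Sum>j\<le>k. b j * p ^ j) | b. \<forall>j\<le>k. b j \<le> digit p n j}"

lemma Pset_Gset: "Pset p k n = Gset p k n - {0, n}"
  by (simp add: Pset_def Gset_def)

lemma n_in_G: "n < p ^ Suc k \<Longrightarrow> n \<in> Gset p k n"
  unfolding Gset_def using digit_expand_le[of n p k]
  by (intro CollectI exI[of _ "digit p n"]) simp

lemma zero_in_G: "0 \<in> Gset p k n"
  unfolding Gset_def by (rule CollectI, rule exI[of _ "\<lambda>j. 0"]) simp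

lemma G_le:
  assumes "n < p ^ Suc k" "m \<in> Gset p k n"
  shows "m \<le> n"
proof -
  obtain b where m: "m = (\<Sum>j\<le>k. b j * p ^ j)" and b: "\<forall>j\<le>k. b j \<le> digit p n j"
    using assms(2) unfolding Gset_def by auto
  have "m \<le> (\<Sum>j\<le>k. digit p n j * p ^ j)"
    unfolding m using b by (intro sum_mono) (simp add: mult_le_mono1)
  then show ?thesis using digit_expand_le[OF assms(1)] by simp
qed

lemma Pset_sub:
  assumes "n < p ^ Suc k"
  shows "Pset p k n \<subseteq> {1..n-1}"
  using G_le[OF assms] unfolding Pset_Gset by force

lemma card_G:
  assumes p: "p > 1"
  shows "card (Gset p k n) = (\<Prod>j\<le>k. digit p n j + 1)"
proof -
  let ?f = "\<lambda>b. \<Sum>j\<le>k. b j * p ^ j"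
  let ?A = "PiE {..k} (\<lambda>j. {..digit p n j})"
  have G: "Gset p k n = ?f ` ?A"
  proof
    show "Gset p k n \<subseteq> ?f ` ?A"
    proof
      fix m assume "m \<in> Gset p k n"
      then obtain b where m: "m = ?f b" and b: "\<forall>j\<le>k. b j \<le> digit p n j"
        unfolding Gset_def by blast
      have "restrict b {..k} \<in> ?A" using b by (simp add: PiE_iff)
      moreover have "m = ?f (restrict b {..k})" unfolding m by (intro sum.cong) auto
      ultimately show "m \<in> ?f ` ?A" by blast
    qed
    show "?f ` ?A \<subseteq> Gset p k n"
      unfolding Gset_def by (auto simp: PiE_def Pi_def)
  qed
  have inj: "inj_on ?f ?A"
  proof (rule inj_onI)
    fix b c assume b: "b \<in> ?A" and c: "c \<in> ?A" and e: "?f b = ?f c"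
    have blt: "\<forall>j<Suc k. b j < p"
    proof (intro allI impI)
      fix j assume "j < Suc k"
      then have "b j \<le> digit p n j" using b by auto
      then show "b j < p" using digit_lt[of p n j] p by simp
    qed
    have clt: "\<forall>j<Suc k. c j < p"
    proof (intro allI impI)
      fix j assume "j < Suc k"
      then have "c j \<le> digit p n j" using c by auto
      then show "c j < p" using digit_lt[of p n j] p by simp
    qed
    show "b = c"
    proof (rule PiE_ext[OF b c])
      fix j assume "j \<in> {..k}"
      then have j: "j < Suc k" by simp
      have "b j = digit p (\<Sum>i<Suc k. b i * p ^ i) j" using digit_val[OF blt j] by simp
      also have "\<dots> = digit p (\<Sum>i<Suc k. c i * p ^ i) j"
        using e by (simp add: lessThan_Suc_atMost)
      also have "\<dots> = c j" using digit_val[OF clt j] by simp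
      finally show "b j = c j" .
    qed
  qed
  show ?thesis unfolding G card_image[OF inj] by (simp add: card_PiE)
qed

lemma card_Pset:
  assumes p: "p > 1" and n: "n < p ^ Suc k" "n \<ge> 2"
  shows "card (Pset p k n) + 2 = (\<Prod>j\<le>k. digit p n j + 1)"
proof -
  have fin: "finite (Gset p k n)"
    using G_le[OF n(1)] by (meson finite_atMost finite_subset subsetI atMost_iff)
  have "{0, n} \<subseteq> Gset p k n" using zero_in_G n_in_G[OF n(1)] by auto
  then have "card (Gset p k n - {0, n}) = card (Gset p k n) - 2"
    using fin n(2) by (simp add: card_Diff_subset)
  moreover have "card (Gset p k n) \<ge> 2"
    using \<open>{0, n} \<subseteq> Gset p k n\<close> fin n(2) card_mono[of "Gset p k n" "{0,n}"] by simp
  ultimately show ?thesis using card_G[OF p] unfolding Pset_Gset by simp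
qed



lemma Q_empty_iff:
  assumes p: "p > 1" and n: "n < p ^ Suc k" "p ^ k \<le> n"
  shows "({1..n-1} - Pset p k n = {}) \<longleftrightarrow> (\<forall>j<k. digit p n j = p - 1)"
proof
  assume all: "\<forall>j<k. digit p n j = p - 1"
  show "{1..n-1} - Pset p k n = {}"
  proof (rule ccontr)
    assume "{1..n-1} - Pset p k n \<noteq> {}"
    then obtain m where m: "m \<in> {1..n-1}" "m \<notin> Pset p k n" by blast
    have mn: "m < p ^ Suc k" using m n by auto
    have ndiv: "n div p ^ k < p" using n p by (simp add: div_less_iff_less_mult mult.commute)
    have "\<forall>j\<le>k. digit p m j \<le> digit p n j"
    proof (intro allI impI)
      fix j assume j: "j \<le> k"
      show "digit p m j \<le> digit p n j"
      proof (cases "j < k")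
        case True
        then show ?thesis using all digit_lt[of p m j] p by simp
      next
        case False
        then have jk: "j = k" using j by simp
        have "digit p m k \<le> m div p ^ k" by (simp add: digit_def)
        also have "\<dots> \<le> n div p ^ k" using m by (intro div_le_mono) auto
        also have "\<dots> = digit p n k" using ndiv by (simp add: digit_def)
        finally show ?thesis using jk by simp
      qed
    qed
    then have "m \<in> Gset p k n"
      unfolding Gset_def using digit_expand_le[OF mn]
      by (intro CollectI exI[of _ "digit p m"]) simp
    then show False using m unfolding Pset_Gset by auto
  qed
next
  assume Q: "{1..n-1} - Pset p k n = {}"
  show "\<forall>j<k. digit p n j = p - 1"
  proof (rule ccontr)
    assume "\<not> (\<forall>j<k. digit p n j = p - 1)"
    then obtain j where j: "j < k" "digit p n j \<noteq> p - 1" by blast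
    define d where "d = digit p n j"
    have dl: "d + 1 < p" using j digit_lt[of p n j] p unfolding d_def by linarith
    define m where "m = (d + 1) * p ^ j"
    have "p ^ j > 0" using p by simp
    then have m1: "m \<ge> 1" unfolding m_def by (simp add: Suc_leI)
    have "m < p * p ^ j" unfolding m_def using dl p by (intro mult_strict_right_mono) simp_all
    also have "p * p ^ j \<le> p ^ k" using j p
      by (metis Suc_leI power_Suc power_increasing less_imp_le)
    finally have mn: "m < n" using n(2) by simp
    have dm: "digit p m j = d + 1"
      unfolding m_def digit_def using p dl by simp
    have "m \<in> Pset p k n" using Q m1 mn by auto
    then obtain b where mb: "m = (\<Sum>i\<le>k. b i * p ^ i)" and b: "\<forall>i\<le>k. b i \<le> digit p n i"
      unfolding Pset_Gset Gset_def by blast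
    have blt: "\<forall>i<Suc k. b i < p"
    proof (intro allI impI)
      fix i assume "i < Suc k"
      then have "b i \<le> digit p n i" using b by auto
      then show "b i < p" using digit_lt[of p n i] p by simp
    qed
    have "digit p m j = b j"
      unfolding mb lessThan_Suc_atMost[symmetric] using digit_val[OF blt] j by simp
    moreover have "b j \<le> d" using b j unfolding d_def by simp
    ultimately show False using dm by simp
  qed
qed

lemma descents_in_P:
  assumes p: "p > 1" and n: "n < p ^ Suc k"
    and beta: "\<beta> \<in> compositions n"
    and dig: "\<forall>j\<le>k. sum_list (map (\<lambda>b. digit p b j) \<beta>) = digit p n j"
  shows "comp_descents \<beta> \<subseteq> Pset p k n"
proof
  fix x assume "x \<in> comp_descents \<beta>"
  then obtain t where x: "x = sum_list (take t \<beta>)" and t: "1 \<le> t" "t < length \<beta>"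
    unfolding comp_descents_def by blast
  have pos: "\<forall>a\<in>set \<beta>. 0 < a" and sn: "sum_list \<beta> = n"
    using beta by (auto simp: compositions_def is_composition_def)
  have le: "\<forall>a\<in>set \<beta>. a \<le> n" using sn by (auto simp: member_le_sum_list)
  have "x = sum_list (map (\<lambda>a. \<Sum>j\<le>k. digit p a j * p ^ j) (take t \<beta>))"
  proof -
    have "\<forall>a\<in>set (take t \<beta>). (\<Sum>j\<le>k. digit p a j * p ^ j) = a"
    proof
      fix a assume "a \<in> set (take t \<beta>)"
      then have "a < p ^ Suc k" using le n by (meson in_set_takeD le_less_trans)
      then show "(\<Sum>j\<le>k. digit p a j * p ^ j) = a" by (rule digit_expand_le)
    qed
    then have "map (\<lambda>a. \<Sum>j\<le>k. digit p a j * p ^ j) (take t \<beta>) = take t \<beta>"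
      by (simp add: map_idI)
    then show ?thesis unfolding x by simp
  qed
  also have "\<dots> = (\<Sum>j\<le>k. sum_list (map (\<lambda>a. digit p a j * p ^ j) (take t \<beta>)))"
    by (rule sum_list_map_sum)
  also have "\<dots> = (\<Sum>j\<le>k. sum_list (map (\<lambda>a. digit p a j) (take t \<beta>)) * p ^ j)"
    by (simp add: sum_list_mult_const)
  finally have xs: "x = (\<Sum>j\<le>k. sum_list (map (\<lambda>a. digit p a j) (take t \<beta>)) * p ^ j)" .
  have bnd: "\<forall>j\<le>k. sum_list (map (\<lambda>a. digit p a j) (take t \<beta>)) \<le> digit p n j"
  proof (intro allI impI)
    fix j assume "j \<le> k"
    have "sum_list (map (\<lambda>a. digit p a j) (take t \<beta>)) = sum_list (take t (map (\<lambda>a. digit p a j) \<beta>))"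
      by (simp add: take_map)
    also have "\<dots> \<le> sum_list (map (\<lambda>a. digit p a j) \<beta>)" by (rule sum_list_take_le)
    finally show "sum_list (map (\<lambda>a. digit p a j) (take t \<beta>)) \<le> digit p n j"
      using dig \<open>j \<le> k\<close> by simp
  qed
  have xG: "x \<in> Gset p k n"
    unfolding Gset_def xs using bnd
    by (intro CollectI exI[of _ "\<lambda>j. sum_list (map (\<lambda>a. digit p a j) (take t \<beta>))"]) simp
  have "take t \<beta> \<noteq> []" using t by (cases \<beta>) auto
  then obtain a where a: "a \<in> set (take t \<beta>)" by (cases "take t \<beta>") auto
  have "a > 0" using a pos by (auto dest: in_set_takeD)
  moreover have "a \<le> x" unfolding x using a by (simp add: member_le_sum_list)
  ultimately have "x > 0" by simp
  moreover have "x < n"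
  proof -
    have sp: "sum_list \<beta> = sum_list (take t \<beta>) + sum_list (drop t \<beta>)"
      by (metis append_take_drop_id sum_list_append)
    have "drop t \<beta> \<noteq> []" using t by simp
    then obtain c where c: "c \<in> set (drop t \<beta>)" by (cases "drop t \<beta>") auto
    have "c > 0" using c pos by (auto dest: in_set_dropD)
    moreover have "c \<le> sum_list (drop t \<beta>)" using c by (simp add: member_le_sum_list)
    ultimately show ?thesis using sp sn x by simp
  qed
  ultimately show "x \<in> Pset p k n" using xG unfolding Pset_Gset by auto
qed



lemma comp_descents_Nil[simp]: "comp_descents [] = {}"
  by (simp add: comp_descents_def)

lemma comp_descents_Cons:
  "comp_descents (a # as) = (if as = [] then {} else insert a ((+) a ` comp_descents as))"
proof (cases "as = []")
  case True
  then show ?thesis by (auto simp: comp_descents_def)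
next
  case False
  have "comp_descents (a # as) = insert a ((+) a ` comp_descents as)"
  proof
    show "comp_descents (a # as) \<subseteq> insert a ((+) a ` comp_descents as)"
    proof
      fix x assume "x \<in> comp_descents (a # as)"
      then obtain j where j: "1 \<le> j" "j < Suc (length as)" and x: "x = sum_list (take j (a#as))"
        unfolding comp_descents_def by auto
      obtain j' where j': "j = Suc j'" using j by (cases j) auto
      have x': "x = a + sum_list (take j' as)" using x j' by simp
      show "x \<in> insert a ((+) a ` comp_descents as)"
      proof (cases "j' = 0")
        case True then show ?thesis using x' by simp
      next
        case False
        then have "sum_list (take j' as) \<in> comp_descents as"
          using j j' unfolding comp_descents_def by auto
        then show ?thesis using x' by blast
      qed
    qed
    show "insert a ((+) a ` comp_descents as) \<subseteq> comp_descents (a # as)"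
    proof
      fix x assume "x \<in> insert a ((+) a ` comp_descents as)"
      then consider "x = a" | y where "y \<in> comp_descents as" "x = a + y" by blast
      then show "x \<in> comp_descents (a # as)"
      proof cases
        case 1
        have "x = sum_list (take 1 (a#as))" using 1 by simp
        moreover have "(1::nat) < length (a#as)" using False by simp
        ultimately show ?thesis unfolding comp_descents_def by blast
      next
        case 2
        then obtain j where j: "1 \<le> j" "j < length as" "y = sum_list (take j as)"
          unfolding comp_descents_def by auto
        have "x = sum_list (take (Suc j) (a#as))" using 2 j by simp
        moreover have "1 \<le> Suc j" "Suc j < length (a#as)" using j by auto
        ultimately show ?thesis unfolding comp_descents_def by blast
      qed
    qed
  qed
  then show ?thesis using False by simp
qed

lemma compositions_Nil: "[] \<in> compositions n \<longleftrightarrow> n = 0"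
  by (auto simp: compositions_def is_composition_def)

lemma compositions_Cons:
  "(a # as) \<in> compositions n \<longleftrightarrow> 0 < a \<and> a \<le> n \<and> as \<in> compositions (n - a)"
  by (auto simp: compositions_def is_composition_def)

lemma compositions_0: "compositions 0 = {[]}"
proof -
  have "x \<in> compositions 0 \<Longrightarrow> x = []" for x
    by (cases x) (auto simp: compositions_def is_composition_def)
  then show ?thesis by (auto simp: compositions_def is_composition_def)
qed

lemma comp_descents_range:
  assumes "\<alpha> \<in> compositions n"
  shows "comp_descents \<alpha> \<subseteq> {1..n-1}"
proof
  fix x assume "x \<in> comp_descents \<alpha>"
  then obtain t where x: "x = sum_list (take t \<alpha>)" and t: "1 \<le> t" "t < length \<alpha>"
    unfolding comp_descents_def by blast
  have pos: "\<forall>a\<in>set \<alpha>. 0 < a" and sn: "sum_list \<alpha> = n"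
    using assms by (auto simp: compositions_def is_composition_def)
  have "take t \<alpha> \<noteq> []" using t by (cases \<alpha>) auto
  then obtain a where a: "a \<in> set (take t \<alpha>)" by (cases "take t \<alpha>") auto
  have "a > 0" using a pos by (auto dest: in_set_takeD)
  moreover have "a \<le> x" unfolding x using a by (simp add: member_le_sum_list)
  ultimately have "x > 0" by simp
  moreover have "x < n"
  proof -
    have sp: "sum_list \<alpha> = sum_list (take t \<alpha>) + sum_list (drop t \<alpha>)"
      by (metis append_take_drop_id sum_list_append)
    have "drop t \<alpha> \<noteq> []" using t by simp
    then obtain c where c: "c \<in> set (drop t \<alpha>)" by (cases "drop t \<alpha>") auto
    have "c > 0" using c pos by (auto dest: in_set_dropD)
    moreover have "c \<le> sum_list (drop t \<alpha>)" using c by (simp add: member_le_sum_list)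
    ultimately show ?thesis using sp sn x by simp
  qed
  ultimately show "x \<in> {1..n-1}" by auto
qed

lemma comp_descents_inj:
  "\<alpha> \<in> compositions n \<Longrightarrow> \<beta> \<in> compositions n \<Longrightarrow> comp_descents \<alpha> = comp_descents \<beta> \<Longrightarrow> \<alpha> = \<beta>"
proof (induction \<alpha> arbitrary: n \<beta>)
  case Nil
  then have "n = 0" by (simp add: compositions_Nil)
  then show ?case using Nil.prems by (simp add: compositions_0)
next
  case (Cons a as)
  have a: "0 < a" "a \<le> n" "as \<in> compositions (n - a)" using Cons.prems(1) by (auto simp: compositions_Cons)
  then have "n \<noteq> 0" by simp
  then obtain b bs where \<beta>: "\<beta> = b # bs" using Cons.prems(2) compositions_Nil by (cases \<beta>) auto
  have b: "0 < b" "b \<le> n" "bs \<in> compositions (n - b)" using Cons.prems(2) \<beta> by (auto simp: compositions_Cons)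
  show ?case
  proof (cases "as = []")
    case True
    then have "comp_descents \<beta> = {}" using Cons.prems(3) by (simp add: comp_descents_Cons)
    then have "bs = []" unfolding \<beta> comp_descents_Cons by (auto split: if_splits)
    then have "b = n" using b by (simp add: compositions_Nil)
    moreover have "a = n" using a True by (simp add: compositions_Nil)
    ultimately show ?thesis using True \<open>bs = []\<close> \<beta> by simp
  next
    case False
    have bsne: "bs \<noteq> []"
    proof
      assume "bs = []"
      then have "comp_descents \<beta> = {}" unfolding \<beta> by (simp add: comp_descents_Cons)
      moreover have "a \<in> comp_descents (a # as)" using False by (simp add: comp_descents_Cons)
      ultimately show False using Cons.prems(3) by simp
    qed
    have DA: "comp_descents (a # as) = insert a ((+) a ` comp_descents as)"
      using False by (simp add: comp_descents_Cons)
    have DB: "comp_descents \<beta> = insert b ((+) b ` comp_descents bs)"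
      using bsne \<beta> by (simp add: comp_descents_Cons)
    have posA: "\<forall>y\<in>comp_descents as. y > 0" using comp_descents_range[OF a(3)] by auto
    have posB: "\<forall>y\<in>comp_descents bs. y > 0" using comp_descents_range[OF b(3)] by auto
    have "a \<in> comp_descents \<beta>" using Cons.prems(3) DA by (metis insertI1)
    then have ab: "a \<ge> b" using DB posB by auto
    have "b \<in> comp_descents (a # as)" using Cons.prems(3) DB by (metis insertI1)
    then have ba: "b \<ge> a" using DA posA by auto
    have eq: "a = b" using ab ba by simp
    have nA: "a \<notin> (+) a ` comp_descents as" using posA by auto
    have nB: "a \<notin> (+) a ` comp_descents bs" using posB by auto
    have "(+) a ` comp_descents as = (+) a ` comp_descents bs"
    proof -
      have "insert a ((+) a ` comp_descents as) = insert a ((+) a ` comp_descents bs)"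
        using Cons.prems(3) DA DB eq by simp
      then show ?thesis using nA nB by (metis Diff_insert_absorb)
    qed
    then have "comp_descents as = comp_descents bs"
      by (simp add: inj_image_eq_iff inj_def)
    then have "as = bs" using Cons.IH[OF a(3)] b(3) eq by simp
    then show ?thesis using eq \<beta> by simp
  qed
qed

lemma comp_descents_surj:
  "U \<subseteq> {1..n-1} \<Longrightarrow> \<exists>\<alpha>\<in>compositions n. comp_descents \<alpha> = U"
proof (induction n arbitrary: U rule: less_induct)
  case (less n)
  show ?case
  proof (cases "U = {}")
    case True
    show ?thesis
    proof (cases "n = 0")
      case True
      then show ?thesis using \<open>U = {}\<close> by (auto simp: compositions_0)
    next
      case False
      have "[n] \<in> compositions n" using False by (simp add: compositions_Cons compositions_Nil)
      moreover have "comp_descents [n] = {}" by (simp add: comp_descents_Cons)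
      ultimately show ?thesis using \<open>U = {}\<close> by blast
    qed
  next
    case False
    have finU: "finite U" using less.prems finite_subset by blast
    define a where "a = Min U"
    have aU: "a \<in> U" using False finU unfolding a_def by simp
    have amin: "\<forall>x\<in>U. a \<le> x" using finU unfolding a_def by simp
    have a1: "1 \<le> a" "a \<le> n - 1" using aU less.prems by auto
    define U' where "U' = (\<lambda>x. x - a) ` (U - {a})"
    have U'sub: "U' \<subseteq> {1..(n-a)-1}"
    proof
      fix y assume "y \<in> U'"
      then obtain x where x: "x \<in> U" "x \<noteq> a" "y = x - a" unfolding U'_def by auto
      have "a < x" using amin x by force
      moreover have "x \<le> n - 1" using x less.prems by auto
      ultimately show "y \<in> {1..(n-a)-1}" using x by auto
    qed
    obtain \<alpha>' where \<alpha>': "\<alpha>' \<in> compositions (n - a)" "comp_descents \<alpha>' = U'"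
      using less.IH[of "n - a" U'] U'sub a1 by auto
    have ne: "\<alpha>' \<noteq> []" using \<alpha>'(1) a1 by (auto simp: compositions_Nil)
    have "a # \<alpha>' \<in> compositions n" using \<alpha>'(1) a1 by (simp add: compositions_Cons)
    moreover have "comp_descents (a # \<alpha>') = U"
    proof -
      have "(+) a ` U' = U - {a}"
      proof
        show "(+) a ` U' \<subseteq> U - {a}"
        proof
          fix z assume "z \<in> (+) a ` U'"
          then obtain x where x: "x \<in> U" "x \<noteq> a" "z = a + (x - a)" unfolding U'_def by auto
          have "a \<le> x" using amin x by auto
          then show "z \<in> U - {a}" using x by simp
        qed
        show "U - {a} \<subseteq> (+) a ` U'"
        proof
          fix x assume x: "x \<in> U - {a}"
          have "a \<le> x" using amin x by auto
          then have "x = a + (x - a)" by simp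
          moreover have "x - a \<in> U'" using x unfolding U'_def by auto
          ultimately show "x \<in> (+) a ` U'" by blast
        qed
      qed
      then show ?thesis using ne \<alpha>'(2) aU by (auto simp: comp_descents_Cons)
    qed
    ultimately show ?thesis by blast
  qed
qed

lemma comp_bij: "bij_betw comp_descents (compositions n) (Pow {1..n-1})"
  unfolding bij_betw_def
proof
  show "inj_on comp_descents (compositions n)"
    by (meson comp_descents_inj inj_onI)
  show "comp_descents ` compositions n = Pow {1..n - 1}"
  proof
    show "comp_descents ` compositions n \<subseteq> Pow {1..n - 1}"
      using comp_descents_range by blast
    show "Pow {1..n - 1} \<subseteq> comp_descents ` compositions n"
      using comp_descents_surj by blast
  qed
qed

lemma finite_compositions: "finite (compositions n)"
proof -
  have "finite (Pow {1..n-1})" by simp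
  then show ?thesis using bij_betw_finite[OF comp_bij[of n]] by simp
qed



definition asc :: "nat set \<Rightarrow> nat list \<Rightarrow> bool" where
  "asc U xs \<longleftrightarrow> (\<forall>m. Suc m < length xs \<longrightarrow> Suc m \<notin> U \<longrightarrow> xs ! m < xs ! Suc m)"

lemma sorted_lt_iff: "sorted_wrt (<) (xs :: nat list) \<longleftrightarrow> (\<forall>m. Suc m < length xs \<longrightarrow> xs ! m < xs ! Suc m)"
  by (rule sorted_wrt_iff_nth_Suc_transp) (simp add: transp_def)

lemma asc_split:
  assumes len: "length ys = b" and b: "0 < b" and zs: "bs = [] \<Longrightarrow> zs = []"
    and pos: "\<forall>a\<in>set bs. 0 < a"
  shows "asc (comp_descents (b # bs)) (ys @ zs) \<longleftrightarrow> sorted_wrt (<) ys \<and> asc (comp_descents bs) zs"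
proof (cases "bs = []")
  case True
  then have "zs = []" using zs by simp
  then show ?thesis using True by (simp add: asc_def sorted_lt_iff comp_descents_Cons)
next
  case False
  define V where "V = comp_descents bs"
  have U: "comp_descents (b # bs) = insert b ((+) b ` V)" using False unfolding V_def
    by (simp add: comp_descents_Cons)
  have memU: "x \<in> comp_descents (b # bs) \<longleftrightarrow> x = b \<or> (x > b \<and> x - b \<in> V)" for x
  proof -
    have "x \<in> (+) b ` V \<longleftrightarrow> (x > b \<and> x - b \<in> V)"
    proof
      assume "x \<in> (+) b ` V"
      then obtain y where y: "y \<in> V" "x = b + y" by auto
      have "bs \<in> compositions (sum_list bs)" using pos by (simp add: compositions_def is_composition_def)
      then have "y > 0" using y(1) comp_descents_range[of bs "sum_list bs"] unfolding V_def
        by force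
      then show "x > b \<and> x - b \<in> V" using y by simp
    next
      assume "x > b \<and> x - b \<in> V"
      then show "x \<in> (+) b ` V" by (metis image_eqI less_imp_le le_add_diff_inverse)
    qed
    then show ?thesis unfolding U by auto
  qed
  show ?thesis
  proof
    assume A: "asc (comp_descents (b # bs)) (ys @ zs)"
    have "sorted_wrt (<) ys"
      unfolding sorted_lt_iff
    proof (intro allI impI)
      fix m assume m: "Suc m < length ys"
      then have "Suc m \<notin> comp_descents (b # bs)" using memU len by auto
      then have "(ys @ zs) ! m < (ys @ zs) ! Suc m" using A m unfolding asc_def by simp
      then show "ys ! m < ys ! Suc m" using m by (simp add: nth_append)
    qed
    moreover have "asc V zs"
      unfolding asc_def
    proof (intro allI impI)
      fix m assume m: "Suc m < length zs" and nV: "Suc m \<notin> V"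
      have "Suc (b + m) \<notin> comp_descents (b # bs)" using memU nV by simp
      moreover have "Suc (b + m) < length (ys @ zs)" using m len by simp
      ultimately have "(ys @ zs) ! (b + m) < (ys @ zs) ! Suc (b + m)" using A unfolding asc_def by blast
      then show "zs ! m < zs ! Suc m" using len by (simp add: nth_append)
    qed
    ultimately show "sorted_wrt (<) ys \<and> asc (comp_descents bs) zs" unfolding V_def by simp
  next
    assume B: "sorted_wrt (<) ys \<and> asc (comp_descents bs) zs"
    show "asc (comp_descents (b # bs)) (ys @ zs)"
      unfolding asc_def
    proof (intro allI impI)
      fix m assume m: "Suc m < length (ys @ zs)" and nU: "Suc m \<notin> comp_descents (b # bs)"
      consider "Suc m < b" | "Suc m = b" | "Suc m > b" by linarith
      then show "(ys @ zs) ! m < (ys @ zs) ! Suc m"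
      proof cases
        case 1
        then show ?thesis using B len unfolding sorted_lt_iff by (simp add: nth_append)
      next
        case 2
        then show ?thesis using nU memU by simp
      next
        case 3
        define m' where "m' = m - b"
        have mm: "m = b + m'" using 3 unfolding m'_def by simp
        have "Suc m' \<notin> V" using nU memU mm by simp
        moreover have "Suc m' < length zs" using m mm len by simp
        ultimately have "zs ! m' < zs ! Suc m'" using B unfolding asc_def V_def by blast
        then show ?thesis using mm len by (simp add: nth_append)
      qed
    qed
  qed
qed

definition Lset :: "nat set \<Rightarrow> nat list \<Rightarrow> nat list set" where
  "Lset A \<beta> = {xs. distinct xs \<and> set xs = A \<and> asc (comp_descents \<beta>) xs}"

lemma Lset_finite: "finite A \<Longrightarrow> finite (Lset A \<beta>)"
proof -
  assume "finite A"
  have "Lset A \<beta> \<subseteq> permutations_of_set A" unfolding Lset_def permutations_of_set_def by auto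
  then show ?thesis using finite_permutations_of_set finite_subset by blast
qed

lemma card_Lset:
  assumes "\<forall>a\<in>set \<beta>. 0 < a" "finite A" "sum_list \<beta> = card A"
  shows "card (Lset A \<beta>) = multinom (card A) \<beta>"
  using assms
proof (induction \<beta> arbitrary: A)
  case Nil
  then have "A = {}" by simp
  then have "Lset A [] = {[]}" unfolding Lset_def asc_def by auto
  then show ?case using \<open>A = {}\<close> by (simp add: multinom_Nil)
next
  case (Cons b bs A)
  have b0: "0 < b" using Cons.prems by simp
  have bA: "b \<le> card A" using Cons.prems by simp
  have posbs: "\<forall>a\<in>set bs. 0 < a" using Cons.prems by simp
  define SB where "SB = {B. B \<subseteq> A \<and> card B = b}"
  define F where "F = (\<lambda>(B, zs). sorted_list_of_set B @ (zs :: nat list))"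
  have IH: "card (Lset (A - B) bs) = multinom (card A - b) bs" if "B \<in> SB" for B
  proof -
    have fB: "finite B" using that Cons.prems(2) finite_subset unfolding SB_def by blast
    have cAB: "card (A - B) = card A - b" using that fB unfolding SB_def by (simp add: card_Diff_subset)
    show ?thesis using Cons.IH[of "A - B"] Cons.prems cAB by simp
  qed
  have eq: "Lset A (b # bs) = F ` (SIGMA B:SB. Lset (A - B) bs)"
  proof
    show "Lset A (b # bs) \<subseteq> F ` (SIGMA B:SB. Lset (A - B) bs)"
    proof
      fix xs assume xs: "xs \<in> Lset A (b # bs)"
      have dx: "distinct xs" and sx: "set xs = A" and ax: "asc (comp_descents (b # bs)) xs"
        using xs unfolding Lset_def by auto
      have lx: "length xs = card A" using dx sx distinct_card by fastforce
      define ys where "ys = take b xs"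
      define zs where "zs = drop b xs"
      have xyz: "xs = ys @ zs" unfolding ys_def zs_def by simp
      have ly: "length ys = b" unfolding ys_def using lx bA by simp
      have zsnil: "bs = [] \<Longrightarrow> zs = []" unfolding zs_def using lx Cons.prems(3) by simp
      have sp: "sorted_wrt (<) ys" and az: "asc (comp_descents bs) zs"
        using asc_split[OF ly b0 zsnil posbs] ax xyz by auto
      have dyz: "distinct ys" "distinct zs" "set ys \<inter> set zs = {}" using dx xyz by auto
      have "card (set ys) = b" using dyz ly distinct_card by metis
      moreover have "set ys \<subseteq> A" using sx xyz by auto
      ultimately have yB: "set ys \<in> SB" unfolding SB_def by simp
      have "set zs = A - set ys" using sx xyz dyz by auto
      then have "zs \<in> Lset (A - set ys) bs" using dyz az unfolding Lset_def by simp
      moreover have "ys = sorted_list_of_set (set ys)"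
        using sp by (simp add: sorted_list_of_set_sort_remdups strict_sorted_iff distinct_remdups_id sorted_sort_id)
      then have "xs = F (set ys, zs)" unfolding F_def xyz by simp
      ultimately show "xs \<in> F ` (SIGMA B:SB. Lset (A - B) bs)" using yB by blast
    qed
    show "F ` (SIGMA B:SB. Lset (A - B) bs) \<subseteq> Lset A (b # bs)"
    proof
      fix xs assume "xs \<in> F ` (SIGMA B:SB. Lset (A - B) bs)"
      then obtain B zs where B: "B \<in> SB" and zs: "zs \<in> Lset (A - B) bs"
        and xs: "xs = sorted_list_of_set B @ zs" unfolding F_def by auto
      have fB: "finite B" using B Cons.prems(2) finite_subset unfolding SB_def by blast
      have BA: "B \<subseteq> A" "card B = b" using B unfolding SB_def by auto
      have lB: "length (sorted_list_of_set B) = b" using BA by simp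
      have zsnil: "bs = [] \<Longrightarrow> zs = []"
      proof -
        assume "bs = []"
        then have "card A = b" using Cons.prems(3) by simp
        then have "A - B = {}" using BA Cons.prems(2)
          by (metis Diff_eq_empty_iff card_subset_eq)
        moreover have "set zs = A - B" using zs unfolding Lset_def by simp
        ultimately have "set zs = {}" by simp
        then show "zs = []" by simp
      qed
      have "sorted_wrt (<) (sorted_list_of_set B)" by simp
      moreover have "asc (comp_descents bs) zs" using zs unfolding Lset_def by simp
      ultimately have "asc (comp_descents (b # bs)) xs"
        unfolding xs using asc_split[OF lB b0 zsnil posbs] by simp
      moreover have "distinct xs" using zs fB unfolding xs Lset_def by auto
      moreover have "set xs = A" using zs fB BA unfolding xs Lset_def by auto
      ultimately show "xs \<in> Lset A (b # bs)" unfolding Lset_def by simp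
    qed
  qed
  have inj: "inj_on F (SIGMA B:SB. Lset (A - B) bs)"
  proof (rule inj_onI)
    fix u v assume u: "u \<in> (SIGMA B:SB. Lset (A - B) bs)" and v: "v \<in> (SIGMA B:SB. Lset (A - B) bs)"
      and e: "F u = F v"
    obtain B zs where u': "u = (B, zs)" "B \<in> SB" using u by auto
    obtain B' zs' where v': "v = (B', zs')" "B' \<in> SB" using v by auto
    have fB: "finite B" "finite B'" using u' v' Cons.prems(2) finite_subset unfolding SB_def by blast+
    have l: "length (sorted_list_of_set B) = length (sorted_list_of_set B')"
      using u' v' unfolding SB_def by simp
    have "sorted_list_of_set B = sorted_list_of_set B' \<and> zs = zs'"
      using e l unfolding F_def u' v' by simp
    then have "B = B'" "zs = zs'" using fB by (metis set_sorted_list_of_set)+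
    then show "u = v" using u' v' by simp
  qed
  have finSB: "finite SB" unfolding SB_def using Cons.prems(2) by simp
  have "card (Lset A (b # bs)) = card (SIGMA B:SB. Lset (A - B) bs)"
    unfolding eq by (rule card_image[OF inj])
  also have "\<dots> = (\<Sum>B\<in>SB. card (Lset (A - B) bs))"
    using finSB Lset_finite Cons.prems(2) by (simp add: card_SigmaI)
  also have "\<dots> = (\<Sum>B\<in>SB. multinom (card A - b) bs)" using IH by simp
  also have "\<dots> = card SB * multinom (card A - b) bs" by simp
  also have "card SB = card A choose b" unfolding SB_def using Cons.prems(2) by (rule n_subsets)
  finally show ?case by (simp add: multinom_Cons)
qed



lemma phi_nth: "m < n \<Longrightarrow> map w [1..<Suc n] ! m = w (Suc m)"
  by (simp del: upt_Suc)

lemma desc_iff_asc: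
  assumes w: "w permutes {1..n}"
  shows "perm_descents n w \<subseteq> U \<longleftrightarrow> asc U (map w [1..<Suc n])"
proof -
  have inj: "inj w" using w by (rule permutes_inj)
  have "asc U (map w [1..<Suc n]) \<longleftrightarrow> (\<forall>m. Suc m < n \<longrightarrow> Suc m \<notin> U \<longrightarrow> w (Suc m) < w (Suc (Suc m)))"
    unfolding asc_def by (auto simp del: upt_Suc)
  also have "\<dots> \<longleftrightarrow> perm_descents n w \<subseteq> U"
  proof
    assume A: "\<forall>m. Suc m < n \<longrightarrow> Suc m \<notin> U \<longrightarrow> w (Suc m) < w (Suc (Suc m))"
    show "perm_descents n w \<subseteq> U"
    proof
      fix i assume "i \<in> perm_descents n w"
      then have i: "1 \<le> i" "i \<le> n - 1" "w i > w (Suc i)" unfolding perm_descents_def by auto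
      obtain m where m: "i = Suc m" using i by (cases i) auto
      show "i \<in> U"
      proof (rule ccontr)
        assume "i \<notin> U"
        then have "w (Suc m) < w (Suc (Suc m))" using A m i by auto
        then show False using i m by simp
      qed
    qed
  next
    assume B: "perm_descents n w \<subseteq> U"
    show "\<forall>m. Suc m < n \<longrightarrow> Suc m \<notin> U \<longrightarrow> w (Suc m) < w (Suc (Suc m))"
    proof (intro allI impI)
      fix m assume m: "Suc m < n" "Suc m \<notin> U"
      then have "Suc m \<notin> perm_descents n w" using B by auto
      then have "\<not> w (Suc m) > w (Suc (Suc m))" using m unfolding perm_descents_def by auto
      moreover have "w (Suc m) \<noteq> w (Suc (Suc m))" using inj by (simp add: inj_eq)
      ultimately show "w (Suc m) < w (Suc (Suc m))" by simp
    qed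
  qed
  finally show ?thesis by simp
qed

lemma card_perm_desc_sub:
  "card {w. w permutes {1..n} \<and> perm_descents n w \<subseteq> U} =
   card {xs. distinct xs \<and> set xs = {1..n} \<and> asc U xs}"
proof -
  let ?phi = "\<lambda>w. map w [1..<Suc n]"
  let ?W = "{w. w permutes {1..n} \<and> perm_descents n w \<subseteq> U}"
  let ?X = "{xs. distinct xs \<and> set xs = {1..n} \<and> asc U xs}"
  have inj: "inj_on ?phi ?W"
  proof (rule inj_onI)
    fix w w' assume w: "w \<in> ?W" and w': "w' \<in> ?W" and e: "?phi w = ?phi w'"
    have pw: "w permutes {1..n}" "w' permutes {1..n}" using w w' by auto
    show "w = w'"
    proof
      fix i
      show "w i = w' i"
      proof (cases "i \<in> {1..n}")
        case True
        then obtain m where m: "i = Suc m" "m < n" by (cases i) auto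
        have "?phi w ! m = ?phi w' ! m" by (simp only: e)
        then show ?thesis using m phi_nth[OF m(2), of w] phi_nth[OF m(2), of w'] by metis
      next
        case False
        then show ?thesis using pw by (simp add: permutes_not_in)
      qed
    qed
  qed
  have img: "?phi ` ?W = ?X"
  proof
    show "?phi ` ?W \<subseteq> ?X"
    proof
      fix xs assume "xs \<in> ?phi ` ?W"
      then obtain w where w: "w permutes {1..n}" "perm_descents n w \<subseteq> U" and xs: "xs = ?phi w" by auto
      have "distinct xs" unfolding xs using permutes_inj[OF w(1)]
        by (simp add: distinct_map inj_on_subset[of w UNIV])
      moreover have "set xs = {1..n}" unfolding xs using permutes_image[OF w(1)]
        by (simp add: atLeastLessThanSuc_atLeastAtMost del: upt_Suc)
      moreover have "asc U xs" unfolding xs using desc_iff_asc[OF w(1)] w(2) by simp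
      ultimately show "xs \<in> ?X" by simp
    qed
    show "?X \<subseteq> ?phi ` ?W"
    proof
      fix xs assume xs: "xs \<in> ?X"
      have d: "distinct xs" and s: "set xs = {1..n}" and a: "asc U xs" using xs by auto
      have l: "length xs = n" using d s distinct_card by fastforce
      define w where "w = (\<lambda>i. if i \<in> {1..n} then xs ! (i - 1) else i)"
      have wp: "w permutes {1..n}"
      proof (rule inj_imp_permutes)
        show "inj_on w {1..n}"
        proof (rule inj_onI)
          fix i j assume i: "i \<in> {1..n}" and j: "j \<in> {1..n}" and e: "w i = w j"
          then have "xs ! (i - 1) = xs ! (j - 1)" unfolding w_def by simp
          then have "i - 1 = j - 1" using d i j l nth_eq_iff_index_eq by fastforce
          then show "i = j" using i j by (simp, linarith)
        qed
        show "finite {1..n}" by simp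
        show "w x \<in> {1..n}" if "x \<in> {1..n}" for x
        proof -
          have "xs ! (x - 1) \<in> set xs" using that l by (intro nth_mem) auto
          then show ?thesis using that s unfolding w_def by simp
        qed
        show "w i = i" if "i \<notin> {1..n}" for i using that unfolding w_def by auto
      qed
      have phi: "?phi w = xs"
      proof (rule nth_equalityI)
        show "length (?phi w) = length xs" using l by simp
        show "?phi w ! m = xs ! m" if "m < length (?phi w)" for m
          using that l unfolding w_def by (simp del: upt_Suc)
      qed
      have "perm_descents n w \<subseteq> U" using desc_iff_asc[OF wp] phi a by simp
      then show "xs \<in> ?phi ` ?W" using wp phi by (metis (mono_tags, lifting) image_eqI mem_Collect_eq)
    qed
  qed
  show ?thesis using card_image[OF inj] img by simp
qed

lemma card_perm_desc_multinom:
  assumes "\<beta> \<in> compositions n"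
  shows "card {w. w permutes {1..n} \<and> perm_descents n w \<subseteq> comp_descents \<beta>} = multinom n \<beta>"
proof -
  have "card {w. w permutes {1..n} \<and> perm_descents n w \<subseteq> comp_descents \<beta>} = card (Lset {1..n} \<beta>)"
    unfolding card_perm_desc_sub Lset_def by simp
  also have "\<dots> = multinom (card {1..n}) \<beta>"
    using assms by (intro card_Lset) (auto simp: compositions_def is_composition_def)
  finally show ?thesis by simp
qed



definition hS :: "nat \<Rightarrow> nat set \<Rightarrow> nat" where
  "hS n S = card {w. w permutes {1..n} \<and> perm_descents n w = S}"

definition FS :: "nat \<Rightarrow> nat set \<Rightarrow> nat" where
  "FS n U = card {w. w permutes {1..n} \<and> perm_descents n w \<subseteq> U}"

lemma FS_sum: "finite U \<Longrightarrow> FS n U = (\<Sum>T\<in>Pow U. hS n T)"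
proof -
  assume fU: "finite U"
  have eq: "{w. w permutes {1..n} \<and> perm_descents n w \<subseteq> U} =
        (\<Union>T\<in>Pow U. {w. w permutes {1..n} \<and> perm_descents n w = T})" by auto
  have fin: "finite {w. w permutes {1..n} \<and> perm_descents n w = T}" for T
    by (rule finite_subset[OF _ finite_permutations[of "{1..n}"]]) auto
  show ?thesis unfolding FS_def hS_def eq
    by (rule card_UN_disjoint) (use fU fin in auto)
qed

lemma FS_multinom: "\<beta> \<in> compositions n \<Longrightarrow> FS n (comp_descents \<beta>) = multinom n \<beta>"
  unfolding FS_def by (rule card_perm_desc_multinom)

lemma mobius:
  assumes "finite S"
  shows "int (hS n S) = (\<Sum>T\<in>Pow S. (-1) ^ (card S - card T) * int (FS n T))"
proof -
  have A: "int (FS n U) = (\<Sum>T\<in>Pow U. (-1) ^ card T * ((-1) ^ card T * int (hS n T)))"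
    if "finite U" for U
    using FS_sum[OF that] by (simp add: mult.assoc[symmetric])
  have "(-1) ^ card S * int (hS n S) = (\<Sum>T\<in>Pow S. (-1) ^ card T * int (FS n T))"
    by (rule inclusion_exclusion_symmetric[where g = "\<lambda>U. int (FS n U)"]) (use A assms in auto)
  then have "int (hS n S) = (-1) ^ card S * (\<Sum>T\<in>Pow S. (-1) ^ card T * int (FS n T))"
    by (metis (no_types, lifting) minus_one_mult_self mult.assoc mult_1)
  also have "\<dots> = (\<Sum>T\<in>Pow S. (-1) ^ (card S - card T) * int (FS n T))"
    unfolding sum_distrib_left
  proof (rule sum.cong[OF refl])
    fix T assume "T \<in> Pow S"
    then have "card T \<le> card S" using assms by (simp add: card_mono)
    then have "(-1::int) ^ card S = (-1) ^ (card S - card T) * (-1) ^ card T"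
      by (simp flip: power_add)
    then show "(-1) ^ card S * ((-1) ^ card T * int (FS n T)) = (-1) ^ (card S - card T) * int (FS n T)"
      by (simp add: mult.assoc)
  qed
  finally show ?thesis .
qed

lemma hS_comp_sum:
  assumes S: "S \<subseteq> {1..n-1}"
  shows "int (hS n S) = (\<Sum>\<beta>\<in>{\<beta>\<in>compositions n. comp_descents \<beta> \<subseteq> S}.
            (-1) ^ (card S - card (comp_descents \<beta>)) * int (multinom n \<beta>))"
proof -
  let ?C = "{\<beta>\<in>compositions n. comp_descents \<beta> \<subseteq> S}"
  have fS: "finite S" using S finite_subset by blast
  have inj: "inj_on comp_descents ?C"
  proof (rule inj_on_subset)
    show "inj_on comp_descents (compositions n)" using comp_bij[of n] unfolding bij_betw_def by simp
  qed auto
  have img: "comp_descents ` ?C = Pow S"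
  proof
    show "comp_descents ` ?C \<subseteq> Pow S" by auto
    show "Pow S \<subseteq> comp_descents ` ?C"
    proof
      fix T assume "T \<in> Pow S"
      then have "T \<subseteq> {1..n-1}" using S by auto
      then obtain \<beta> where "\<beta> \<in> compositions n" "comp_descents \<beta> = T"
        using comp_descents_surj by blast
      then show "T \<in> comp_descents ` ?C" using \<open>T \<in> Pow S\<close> by auto
    qed
  qed
  have "int (hS n S) = (\<Sum>T\<in>comp_descents ` ?C. (-1) ^ (card S - card T) * int (FS n T))"
    unfolding img by (rule mobius[OF fS])
  also have "\<dots> = (\<Sum>\<beta>\<in>?C. (-1) ^ (card S - card (comp_descents \<beta>)) * int (FS n (comp_descents \<beta>)))"
    by (simp add: sum.reindex[OF inj])
  also have "\<dots> = (\<Sum>\<beta>\<in>?C. (-1) ^ (card S - card (comp_descents \<beta>)) * int (multinom n \<beta>))"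
    by (rule sum.cong[OF refl]) (simp add: FS_multinom)
  finally show ?thesis .
qed

definition Lp :: "nat \<Rightarrow> nat \<Rightarrow> nat \<Rightarrow> nat list \<Rightarrow> int" where
  "Lp p k n \<beta> = (\<Prod>j\<le>k. int (multinom (digit p n j) (map (\<lambda>b. digit p b j) \<beta>)))"

lemma Lp_nonzero:
  assumes "Lp p k n \<beta> \<noteq> 0"
  shows "\<forall>j\<le>k. sum_list (map (\<lambda>b. digit p b j) \<beta>) = digit p n j"
proof (intro allI impI)
  fix j assume j: "j \<le> k"
  have "int (multinom (digit p n j) (map (\<lambda>b. digit p b j) \<beta>)) \<noteq> 0"
    using assms j unfolding Lp_def by (auto simp: prod_zero_iff)
  then show "sum_list (map (\<lambda>b. digit p b j) \<beta>) = digit p n j"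
    unfolding multinom_def by (auto split: if_splits)
qed

lemma rT_alt:
  "rT p k n T = (\<Sum>\<beta>\<in>{\<beta>\<in>compositions n. comp_descents \<beta> \<subseteq> T}.
      (-1) ^ (card T - card (comp_descents \<beta>)) * Lp p k n \<beta>)"
proof -
  let ?A = "{\<beta> \<in> compositions n. comp_descents \<beta> \<subseteq> T \<and>
                    (\<forall>j\<le>k. (\<Sum>b\<leftarrow>\<beta>. digit p b j) = digit p n j)}"
  let ?B = "{\<beta>\<in>compositions n. comp_descents \<beta> \<subseteq> T}"
  have fin: "finite ?B" using finite_compositions[of n] by simp
  have "rT p k n T = (\<Sum>\<beta>\<in>?A. (-1) ^ (card T - card (comp_descents \<beta>)) * Lp p k n \<beta>)"
    unfolding rT_def Lp_def by simp
  also have "\<dots> = (\<Sum>\<beta>\<in>?B. (-1) ^ (card T - card (comp_descents \<beta>)) * Lp p k n \<beta>)"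
  proof (rule sum.mono_neutral_left[OF fin])
    show "?A \<subseteq> ?B" by auto
    show "\<forall>\<beta>\<in>?B - ?A. (-1) ^ (card T - card (comp_descents \<beta>)) * Lp p k n \<beta> = 0"
      using Lp_nonzero by fastforce
  qed
  finally show ?thesis .
qed

lemma main_cong:
  assumes p: "prime p" and n: "n < p ^ Suc k" and S: "S \<subseteq> {1..n-1}"
  shows "[int (hS n S) = (-1) ^ card (S - Pset p k n) * rT p k n (S \<inter> Pset p k n)] (mod int p)"
proof -
  let ?P = "Pset p k n"
  let ?T = "S \<inter> ?P"
  let ?CS = "{\<beta>\<in>compositions n. comp_descents \<beta> \<subseteq> S}"
  let ?CT = "{\<beta>\<in>compositions n. comp_descents \<beta> \<subseteq> ?T}"
  have p1: "p > 1" using p prime_gt_1_nat by blast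
  have fS: "finite S" using S finite_subset by blast
  have finCS: "finite ?CS" using finite_compositions[of n] by simp
  have "[int (hS n S) = (\<Sum>\<beta>\<in>?CS. (-1) ^ (card S - card (comp_descents \<beta>)) * Lp p k n \<beta>)] (mod int p)"
    unfolding hS_comp_sum[OF S]
  proof (rule cong_sum, rule cong_mult[OF cong_refl])
    fix \<beta> assume "\<beta> \<in> ?CS"
    then have "sum_list \<beta> = n" by (simp add: compositions_def is_composition_def)
    then show "[int (multinom n \<beta>) = Lp p k n \<beta>] (mod int p)"
      unfolding Lp_def by (rule lucas_multinom[OF p n])
  qed
  also have "(\<Sum>\<beta>\<in>?CS. (-1) ^ (card S - card (comp_descents \<beta>)) * Lp p k n \<beta>) =
             (\<Sum>\<beta>\<in>?CT. (-1) ^ (card S - card (comp_descents \<beta>)) * Lp p k n \<beta>)"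
  proof (rule sum.mono_neutral_right[OF finCS])
    show "?CT \<subseteq> ?CS" by auto
    show "\<forall>\<beta>\<in>?CS - ?CT. (-1) ^ (card S - card (comp_descents \<beta>)) * Lp p k n \<beta> = 0"
    proof
      fix \<beta> assume b: "\<beta> \<in> ?CS - ?CT"
      have "Lp p k n \<beta> = 0"
      proof (rule ccontr)
        assume "Lp p k n \<beta> \<noteq> 0"
        then have "comp_descents \<beta> \<subseteq> ?P"
          using descents_in_P[OF p1 n] b Lp_nonzero by blast
        then show False using b by auto
      qed
      then show "(-1) ^ (card S - card (comp_descents \<beta>)) * Lp p k n \<beta> = 0" by simp
    qed
  qed
  also have "\<dots> = (\<Sum>\<beta>\<in>?CT. (-1) ^ card (S - ?P) * ((-1) ^ (card ?T - card (comp_descents \<beta>)) * Lp p k n \<beta>))"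
  proof (rule sum.cong[OF refl])
    fix \<beta> assume "\<beta> \<in> ?CT"
    then have "card (comp_descents \<beta>) \<le> card ?T" using fS by (simp add: card_mono)
    moreover have "card S = card ?T + card (S - ?P)" using fS by (rule card_Int_Diff)
    ultimately have "card S - card (comp_descents \<beta>) = card (S - ?P) + (card ?T - card (comp_descents \<beta>))"
      by simp
    then show "(-1) ^ (card S - card (comp_descents \<beta>)) * Lp p k n \<beta> =
        (-1) ^ card (S - ?P) * ((-1) ^ (card ?T - card (comp_descents \<beta>)) * Lp p k n \<beta>)"
      by (simp add: power_add)
  qed
  also have "\<dots> = (-1) ^ card (S - ?P) * rT p k n ?T"
    unfolding rT_alt by (simp add: sum_distrib_left)
  finally show ?thesis .
qed



definition Ev :: "nat set \<Rightarrow> nat" where "Ev Q = card {R. R \<subseteq> Q \<and> even (card R)}"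
definition Od :: "nat set \<Rightarrow> nat" where "Od Q = card {R. R \<subseteq> Q \<and> odd (card R)}"

lemma count_sign:
  fixes r i m :: int
  assumes fQ: "finite Q"
  shows "card {R. R \<subseteq> Q \<and> [(-1) ^ card R * r = i] (mod m)} =
    (if [r = i] (mod m) then Ev Q else 0) + (if [- r = i] (mod m) then Od Q else 0)"
proof -
  let ?A = "{R. R \<subseteq> Q \<and> even (card R) \<and> [r = i] (mod m)}"
  let ?B = "{R. R \<subseteq> Q \<and> odd (card R) \<and> [- r = i] (mod m)}"
  have eq: "{R. R \<subseteq> Q \<and> [(-1) ^ card R * r = i] (mod m)} = ?A \<union> ?B"
    by (auto simp: minus_one_power_iff)
  have fin: "finite ?A" "finite ?B" using fQ by auto
  have dis: "?A \<inter> ?B = {}" by auto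
  have cA: "card ?A = (if [r = i] (mod m) then Ev Q else 0)" unfolding Ev_def by auto
  have cB: "card ?B = (if [- r = i] (mod m) then Od Q else 0)" unfolding Od_def by auto
  show ?thesis unfolding eq card_Un_disjoint[OF fin dis] cA cB ..
qed

lemma Ev_Od_sum: "finite Q \<Longrightarrow> Ev Q + Od Q = 2 ^ card Q"
proof -
  assume fQ: "finite Q"
  have "Pow Q = {R. R \<subseteq> Q \<and> even (card R)} \<union> {R. R \<subseteq> Q \<and> odd (card R)}" by auto
  moreover have "{R. R \<subseteq> Q \<and> even (card R)} \<inter> {R. R \<subseteq> Q \<and> odd (card R)} = {}" by auto
  ultimately have "card (Pow Q) = Ev Q + Od Q"
    unfolding Ev_def Od_def using fQ by (simp add: card_Un_disjoint)
  then show ?thesis using card_Pow[OF fQ] by simp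
qed

lemma Ev_Od_eq: "finite Q \<Longrightarrow> Q \<noteq> {} \<Longrightarrow> Ev Q = Od Q"
  unfolding Ev_def Od_def using card_subsupersets_even_odd[of Q "{}"] by auto

lemma Ev_Od_empty: "Ev {} = 1" "Od {} = 0"
proof -
  have "{R. R \<subseteq> ({}::nat set) \<and> even (card R)} = {{}}" by auto
  then show "Ev {} = 1" unfolding Ev_def by simp
  have "{R. R \<subseteq> ({}::nat set) \<and> odd (card R)} = {}" by auto
  then show "Od {} = 0" unfolding Od_def by simp
qed

lemma split_count:
  assumes fN: "finite N" and PN: "P \<subseteq> N"
  shows "card {S. S \<subseteq> N \<and> \<Phi> (S \<inter> P) (S - P)} =
         (\<Sum>T\<in>Pow P. card {R. R \<subseteq> N - P \<and> \<Phi> T R})"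
proof -
  let ?X = "{S. S \<subseteq> N \<and> \<Phi> (S \<inter> P) (S - P)}"
  let ?Y = "SIGMA T:Pow P. {R. R \<subseteq> N - P \<and> \<Phi> T R}"
  let ?f = "\<lambda>S. (S \<inter> P, S - P)"
  have inj: "inj_on ?f ?X"
  proof (rule inj_onI)
    fix S S' assume "?f S = ?f S'"
    then have "S \<inter> P = S' \<inter> P" "S - P = S' - P" by auto
    then show "S = S'" by blast
  qed
  have img: "?f ` ?X = ?Y"
  proof
    show "?f ` ?X \<subseteq> ?Y" by auto
    show "?Y \<subseteq> ?f ` ?X"
    proof
      fix x assume "x \<in> ?Y"
      then obtain T R where x: "x = (T, R)" and T: "T \<subseteq> P" and R: "R \<subseteq> N - P" "\<Phi> T R" by auto
      have e1: "(T \<union> R) \<inter> P = T" using T R by auto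
      have e2: "(T \<union> R) - P = R" using T R by auto
      have "T \<union> R \<in> ?X" using T R PN e1 e2 by auto
      moreover have "x = ?f (T \<union> R)" using x e1 e2 by simp
      ultimately show "x \<in> ?f ` ?X" by blast
    qed
  qed
  have "card ?X = card ?Y" using card_image[OF inj] img by simp
  also have "\<dots> = (\<Sum>T\<in>Pow P. card {R. R \<subseteq> N - P \<and> \<Phi> T R})"
    by (rule card_SigmaI) (use fN PN finite_subset in auto)
  finally show ?thesis .
qed

lemma sum_if_card:
  "finite A \<Longrightarrow> (\<Sum>x\<in>A. if Q x then (c::nat) else 0) = c * card {x\<in>A. Q x}"
  by (simp add: sum.inter_filter[symmetric])

lemma c_count_sets:
  "c_count p i n = card {S. S \<subseteq> {1..n-1} \<and> [int (hS n S) = i] (mod int p)}"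
proof -
  let ?C = "{\<alpha> \<in> compositions n. [int (ribbon n \<alpha>) = i] (mod int p)}"
  have inj: "inj_on comp_descents ?C"
  proof (rule inj_on_subset)
    show "inj_on comp_descents (compositions n)" using comp_bij[of n] unfolding bij_betw_def by simp
  qed auto
  have r: "ribbon n \<alpha> = hS n (comp_descents \<alpha>)" for \<alpha> unfolding ribbon_def hS_def ..
  have img: "comp_descents ` ?C = {S. S \<subseteq> {1..n-1} \<and> [int (hS n S) = i] (mod int p)}"
  proof
    show "comp_descents ` ?C \<subseteq> {S. S \<subseteq> {1..n-1} \<and> [int (hS n S) = i] (mod int p)}"
      using comp_descents_range r by auto
    show "{S. S \<subseteq> {1..n-1} \<and> [int (hS n S) = i] (mod int p)} \<subseteq> comp_descents ` ?C"
    proof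
      fix S assume S: "S \<in> {S. S \<subseteq> {1..n-1} \<and> [int (hS n S) = i] (mod int p)}"
      then obtain \<alpha> where "\<alpha> \<in> compositions n" "comp_descents \<alpha> = S"
        using comp_descents_surj by blast
      then show "S \<in> comp_descents ` ?C" using S r by auto
    qed
  qed
  show ?thesis unfolding c_count_def using card_image[OF inj] img by simp
qed



lemma neg_cong_2: "[- (x::int) = i] (mod 2) \<longleftrightarrow> [x = i] (mod 2)"
proof -
  have "[- x = x] (mod 2)" unfolding cong_iff_dvd_diff by simp
  then show ?thesis using cong_trans cong_sym by blast
qed

lemma neg_cong_0: "[- (x::int) = 0] (mod m) \<longleftrightarrow> [x = 0] (mod m)"
  by (simp add: cong_0_iff)

lemma excl:
  fixes p :: nat and i x :: int
  assumes p: "prime p" "p \<noteq> 2" and i: "0 < i" "i < int p"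
  shows "\<not> ([x = i] (mod int p) \<and> [x = - i] (mod int p))"
proof
  assume "[x = i] (mod int p) \<and> [x = - i] (mod int p)"
  then have "[i = - i] (mod int p)" using cong_trans cong_sym by blast
  then have "int p dvd (i - - i)" unfolding cong_iff_dvd_diff .
  then have "int p dvd int (2 * nat i)" using i by simp
  then have "p dvd 2 * nat i" by (simp only: of_nat_dvd_iff)
  then have "p dvd 2 \<or> p dvd nat i" using p(1) prime_dvd_mult_iff by blast
  moreover have "\<not> p dvd 2"
  proof
    assume "p dvd 2"
    then have "p \<le> 2" by (simp add: dvd_imp_le)
    moreover have "p > 1" using p(1) prime_gt_1_nat by blast
    ultimately show False using p(2) by simp
  qed
  moreover have "\<not> p dvd nat i"
  proof
    assume "p dvd nat i"
    moreover have "nat i > 0" "nat i < p" using i by auto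
    ultimately show False using dvd_imp_le by fastforce
  qed
  ultimately show False by blast
qed

theorem theorem3p1:
  fixes p n k :: nat and i :: int
  assumes "prime p" and "n \<ge> 2"
    and "p ^ k \<le> n" and "n < p ^ Suc k"
    and "0 \<le> i" and "i < int p"
  shows "c_count p i n =
    (if p = 2 \<or> i = 0 \<or> (\<forall>j<k. digit p n j = p - 1)
     then 2 ^ (n + 1 - (\<Prod>j\<le>k. digit p n j + 1)) *
          card {T. T \<subseteq> Pset p k n \<and> [rT p k n T = i] (mod int p)}
     else 2 ^ (n - (\<Prod>j\<le>k. digit p n j + 1)) *
          card {T. T \<subseteq> Pset p k n \<and> ([rT p k n T = i] (mod int p) \<or> [rT p k n T = - i] (mod int p))})"
proof -
  note p = assms(1)
  define P where "P = Pset p k n"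
  define N where "N = {1..n-1}"
  define Q where "Q = N - P"
  define q where "q = card Q"
  define pr where "pr = (\<Prod>j\<le>k. digit p n j + 1)"
  define cnt where "cnt = (\<lambda>T. card {R. R \<subseteq> Q \<and> [(-1) ^ card R * rT p k n T = i] (mod int p)})"
  have p1: "p > 1" using p prime_gt_1_nat by blast
  have PN: "P \<subseteq> N" unfolding P_def N_def by (rule Pset_sub[OF assms(4)])
  have fN: "finite N" unfolding N_def by simp
  have fP: "finite P" using PN fN finite_subset by blast
  have fQ: "finite Q" unfolding Q_def using fN by simp
  have cP: "card P + 2 = pr" unfolding P_def pr_def by (rule card_Pset[OF p1 assms(4) assms(2)])
  have cN: "card N = n - 1" unfolding N_def by simp
  have cPN: "card P \<le> card N" using PN fN by (rule card_mono[rotated])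
  have cQ: "q = card N - card P" unfolding q_def Q_def using PN fP by (simp add: card_Diff_subset)
  have q1: "q = n + 1 - pr" using cQ cP cN cPN assms(2) by linarith
  have q2: "q - 1 = n - pr" using q1 by simp
  have Qe: "Q = {} \<longleftrightarrow> (\<forall>j<k. digit p n j = p - 1)"
    unfolding Q_def N_def P_def by (rule Q_empty_iff[OF p1 assms(4) assms(3)])
  have step1: "c_count p i n = card {S. S \<subseteq> N \<and> [(-1) ^ card (S - P) * rT p k n (S \<inter> P) = i] (mod int p)}"
    unfolding c_count_sets
  proof (rule arg_cong[where f = card], rule Collect_cong)
    fix S
    show "(S \<subseteq> {1..n - 1} \<and> [int (hS n S) = i] (mod int p)) =
          (S \<subseteq> N \<and> [(-1) ^ card (S - P) * rT p k n (S \<inter> P) = i] (mod int p))"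
    proof (cases "S \<subseteq> N")
      case True
      have "[int (hS n S) = (-1) ^ card (S - P) * rT p k n (S \<inter> P)] (mod int p)"
        unfolding P_def using main_cong[OF p assms(4)] True unfolding N_def by blast
      then show ?thesis using True cong_trans cong_sym unfolding N_def by blast
    next
      case False
      then show ?thesis unfolding N_def by simp
    qed
  qed
  have step2: "c_count p i n = (\<Sum>T\<in>Pow P. cnt T)"
    unfolding step1 cnt_def Q_def
    by (rule split_count[OF fN PN, where \<Phi> = "\<lambda>T R. [(-1) ^ card R * rT p k n T = i] (mod int p)"])
  have step3: "cnt T = (if [rT p k n T = i] (mod int p) then Ev Q else 0) +
      (if [- rT p k n T = i] (mod int p) then Od Q else 0)" for T
    unfolding cnt_def by (rule count_sign[OF fQ])
  have EO: "Ev Q + Od Q = 2 ^ q" unfolding q_def by (rule Ev_Od_sum[OF fQ])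
  have setA: "{T. T \<subseteq> Pset p k n \<and> [rT p k n T = i] (mod int p)} = {T \<in> Pow P. [rT p k n T = i] (mod int p)}"
    unfolding P_def by auto
  have setB: "{T. T \<subseteq> Pset p k n \<and> ([rT p k n T = i] (mod int p) \<or> [rT p k n T = - i] (mod int p))}
      = {T \<in> Pow P. [rT p k n T = i] (mod int p) \<or> [rT p k n T = - i] (mod int p)}"
    unfolding P_def by auto
  show ?thesis
  proof (cases "p = 2 \<or> i = 0 \<or> (\<forall>j<k. digit p n j = p - 1)")
    case True
    have cT: "cnt T = (if [rT p k n T = i] (mod int p) then 2 ^ q else 0)" for T
    proof (cases "p = 2 \<or> i = 0")
      case True
      have "[- rT p k n T = i] (mod int p) \<longleftrightarrow> [rT p k n T = i] (mod int p)"
      proof (cases "p = 2")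
        case True
        then show ?thesis using neg_cong_2 by simp
      next
        case False
        then have "i = 0" using \<open>p = 2 \<or> i = 0\<close> by simp
        then show ?thesis using neg_cong_0 by simp
      qed
      then show ?thesis using step3[of T] EO by simp
    next
      case False
      then have "\<forall>j<k. digit p n j = p - 1" using \<open>p = 2 \<or> i = 0 \<or> (\<forall>j<k. digit p n j = p - 1)\<close> by simp
      then have "Q = {}" using Qe by simp
      then have "q = 0" "Ev Q = 1" "Od Q = 0" unfolding q_def using Ev_Od_empty by auto
      then show ?thesis using step3[of T] by simp
    qed
    have "c_count p i n = 2 ^ q * card {T \<in> Pow P. [rT p k n T = i] (mod int p)}"
      unfolding step2 cT using fP by (simp add: sum_if_card)
    then show ?thesis using True unfolding setA q1 pr_def by simp
  next
    case False
    then have np2: "p \<noteq> 2" and i0: "i \<noteq> 0" and nall: "\<not> (\<forall>j<k. digit p n j = p - 1)" by auto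
    have Qne: "Q \<noteq> {}" using Qe nall by simp
    have ipos: "0 < i" using i0 assms(5) by simp
    have "q > 0" unfolding q_def using fQ Qne by (simp add: card_gt_0_iff)
    have "Ev Q = Od Q" using Ev_Od_eq[OF fQ Qne] .
    moreover have "(2::nat) ^ q = 2 * 2 ^ (q - 1)" using \<open>q > 0\<close> by (cases q) auto
    ultimately have E: "Ev Q = 2 ^ (q - 1)" "Od Q = 2 ^ (q - 1)" using EO by linarith+
    have cT: "cnt T = (if [rT p k n T = i] (mod int p) \<or> [rT p k n T = - i] (mod int p) then 2 ^ (q - 1) else 0)" for T
    proof -
      have m: "[- rT p k n T = i] (mod int p) \<longleftrightarrow> [rT p k n T = - i] (mod int p)"
        using cong_minus_minus_iff[of "rT p k n T" "- i" "int p"] by simp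
      have "\<not> ([rT p k n T = i] (mod int p) \<and> [rT p k n T = - i] (mod int p))"
        by (rule excl[OF p np2 ipos assms(6)])
      then show ?thesis using step3[of T] E m by auto
    qed
    have "c_count p i n = 2 ^ (q - 1) * card {T \<in> Pow P. [rT p k n T = i] (mod int p) \<or> [rT p k n T = - i] (mod int p)}"
      unfolding step2 cT using fP by (simp add: sum_if_card)
    then show ?thesis unfolding if_not_P[OF False] setB q2 pr_def by simp
  qed
qed


end
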